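(* Let $G$ be a connected graph containing a longest path $L=x_0x_1\ldots x_p$ with $p\ge 2$, and a path $P=y_0y_1\ldots y_s$ with $s\ge p-2$. Then $|V(L)\cap V(P)|\ge 1$, unless $p$ is even, $s=p-2$, and $x_{p/2}y_{s/2}$ is a cut-edge of $G$.
   Context: All graphs are finite, simple and undirected. The length of a path is its number of edges; a longest path is one of maximum length in $G$. A cut-edge is an edge whose removal disconnects the graph. *)

theory Defs
  imports Main
begin

definition simple_graph :: "'a set \<Rightarrow> 'a set set \<Rightarrow> bool" where
  "simple_graph V E \<longleftrightarrow> finite V \<and> (\<forall>e\<in>E. \<exists>u v. e = {u, v} \<and> u \<noteq> v \<and> u \<in> V \<and> v \<in> V)"

text \<open>A path is a nonempty list of distinct vertices, consecutive ones adjacent.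
  Its length (number of edges) is length xs - 1.\<close>
definition is_path :: "'a set \<Rightarrow> 'a set set \<Rightarrow> 'a list \<Rightarrow> bool" where
  "is_path V E xs \<longleftrightarrow> xs \<noteq> [] \<and> distinct xs \<and> set xs \<subseteq> V \<and>
     (\<forall>i. Suc i < length xs \<longrightarrow> {xs ! i, xs ! Suc i} \<in> E)"

definition longest_path :: "'a set \<Rightarrow> 'a set set \<Rightarrow> 'a list \<Rightarrow> bool" where
  "longest_path V E xs \<longleftrightarrow> is_path V E xs \<and> (\<forall>ys. is_path V E ys \<longrightarrow> length ys \<le> length xs)"

definition graph_connected :: "'a set \<Rightarrow> 'a set set \<Rightarrow> bool" where
  "graph_connected V E \<longleftrightarrow>
     (\<forall>u\<in>V. \<forall>v\<in>V. \<exists>xs. is_path V E xs \<and> hd xs = u \<and> last xs = v)"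

definition cut_edge :: "'a set \<Rightarrow> 'a set set \<Rightarrow> 'a set \<Rightarrow> bool" where
  "cut_edge V E e \<longleftrightarrow> e \<in> E \<and> graph_connected V E \<and> \<not> graph_connected V (E - {e})"

end

theory Submission
  imports Defs
begin

definition pth :: "'a set \<Rightarrow> 'a set set \<Rightarrow> 'a list \<Rightarrow> bool" where
  "pth V E xs \<longleftrightarrow> distinct xs \<and> set xs \<subseteq> V \<and> successively (\<lambda>a b. {a,b} \<in> E) xs"

lemma is_path_pth: "is_path V E xs \<longleftrightarrow> xs \<noteq> [] \<and> pth V E xs"
  unfolding is_path_def pth_def successively_conv_nth by blast

lemma pth_append: "pth V E (xs @ ys) \<longleftrightarrow> pth V E xs \<and> pth V E ys \<and> set xs \<inter> set ys = {}
   \<and> (xs = [] \<or> ys = [] \<or> {last xs, hd ys} \<in> E)"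
  unfolding pth_def successively_append_iff by auto

lemma pth_rev: "pth V E (rev xs) \<longleftrightarrow> pth V E xs"
  unfolding pth_def successively_rev by (simp add: insert_commute)

lemma pth_take: "pth V E xs \<Longrightarrow> pth V E (take n xs)"
  using pth_append[of V E "take n xs" "drop n xs"] by simp

lemma pth_drop: "pth V E xs \<Longrightarrow> pth V E (drop n xs)"
  using pth_append[of V E "take n xs" "drop n xs"] by simp


lemma segment:
  assumes "pth V E R" "R \<noteq> []" "hd R \<in> S" "last R \<in> T" "S \<inter> T = {}"
  shows "\<exists>Q. Q \<noteq> [] \<and> pth V E Q \<and> hd Q \<in> S \<and> last Q \<in> T \<and> set Q \<inter> S = {hd Q} \<and> set Q \<inter> T = {last Q}"
proof -
  define Pr where "Pr n \<longleftrightarrow> (\<exists>Q us ws. R = us @ Q @ ws \<and> Q \<noteq> [] \<and> hd Q \<in> S \<and> last Q \<in> T \<and> length Q = n)" for n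
  have "Pr (length R)" unfolding Pr_def using assms by (metis append_Nil append_Nil2)
  then obtain n where n: "Pr n" and min: "\<And>m. m < n \<Longrightarrow> \<not> Pr m"
    by (metis exists_least_iff)
  then obtain Q us ws where Q: "R = us @ Q @ ws" "Q \<noteq> []" "hd Q \<in> S" "last Q \<in> T" "length Q = n"
    unfolding Pr_def by blast
  have pQ: "pth V E Q" using assms(1) Q(1) pth_append by metis
  have "set Q \<inter> S \<subseteq> {hd Q}"
  proof
    fix c assume c: "c \<in> set Q \<inter> S"
    show "c \<in> {hd Q}"
    proof (rule ccontr)
      assume ne: "c \<notin> {hd Q}"
      obtain Q1 Q2 where sp: "Q = Q1 @ c # Q2" using c by (meson IntD1 split_list)
      have "Q1 \<noteq> []" using sp ne by auto
      hence "Pr (length (c # Q2))" unfolding Pr_def using Q sp c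
        by (intro exI[of _ "c # Q2"] exI[of _ "us @ Q1"] exI[of _ ws]) auto
      moreover have "length (c # Q2) < n" using Q(5) sp \<open>Q1 \<noteq> []\<close> by auto
      ultimately show False using min by blast
    qed
  qed
  moreover have "set Q \<inter> T \<subseteq> {last Q}"
  proof
    fix c assume c: "c \<in> set Q \<inter> T"
    show "c \<in> {last Q}"
    proof (rule ccontr)
      assume ne: "c \<notin> {last Q}"
      obtain Q1 Q2 where sp: "Q = Q1 @ c # Q2" using c by (meson IntD1 split_list)
      have "Q2 \<noteq> []" using sp ne by auto
      have "Q1 \<noteq> []" using sp c Q(3) assms(5) by (cases Q1) auto
      hence "Pr (length (Q1 @ [c]))" unfolding Pr_def using Q sp c
        by (intro exI[of _ "Q1 @ [c]"] exI[of _ "us"] exI[of _ "Q2 @ ws"]) auto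
      moreover have "length (Q1 @ [c]) < n" using Q(5) sp \<open>Q2 \<noteq> []\<close> by auto
      ultimately show False using min by blast
    qed
  qed
  ultimately show ?thesis using Q pQ by auto
qed

lemma combine:
  assumes "pth V E (A @ [x])" "pth V E (y # B)" "pth V E Q" "Q \<noteq> []" "hd Q = x" "last Q = y"
    "set A \<inter> set Q = {}" "set B \<inter> set Q = {}" "set A \<inter> set B = {}"
  shows "pth V E (A @ Q @ B)"
proof -
  have "pth V E A" "A = [] \<or> {last A, x} \<in> E" using assms(1) pth_append[of V E A "[x]"] by auto
  moreover have "pth V E B" "B = [] \<or> {y, hd B} \<in> E" using assms(2) pth_append[of V E "[y]" B] by auto
  moreover have "pth V E (Q @ B)" using assms pth_append[of V E Q B] calculation by auto
  ultimately show ?thesis using assms pth_append[of V E A "Q @ B"] by auto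
qed

lemma core:
  assumes con: "graph_connected V E" and lL: "longest_path V E L" and Lp: "length L = p + 1"
    and pP: "is_path V E P" and Ps: "length P = s + 1" and sp: "s + 2 \<ge> p"
    and dis: "set L \<inter> set P = {}"
  shows "even p \<and> s + 2 = p \<and> {L ! (p div 2), P ! (s div 2)} \<in> E"
proof -
  have pL: "is_path V E L" using lL longest_path_def by blast
  have pthL: "pth V E L" and pthP: "pth V E P" using pL pP is_path_pth by auto
  have "hd L \<in> V" "hd P \<in> V" using pL pP unfolding is_path_def by auto
  then obtain R where R: "is_path V E R" "hd R = hd L" "last R = hd P"
    using con unfolding graph_connected_def by blast
  have "hd L \<in> set L" "hd P \<in> set P" using pL pP unfolding is_path_def by auto
  then obtain Q where Q: "Q \<noteq> []" "pth V E Q" "hd Q \<in> set L" "last Q \<in> set P"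
    "set Q \<inter> set L = {hd Q}" "set Q \<inter> set P = {last Q}"
    using segment[of V E R "set L" "set P"] R dis is_path_pth by metis
  define x where "x = hd Q"
  define y where "y = last Q"
  obtain i where i: "i < length L" "L ! i = x" using Q(3) x_def by (metis in_set_conv_nth)
  obtain j where j: "j < length P" "P ! j = y" using Q(4) y_def by (metis in_set_conv_nth)
  have dL: "distinct L" and dP: "distinct P" using pthL pthP pth_def by auto
  have Ld: "L = take i L @ x # drop (Suc i) L" using i id_take_nth_drop by metis
  have Pd: "P = take j P @ y # drop (Suc j) P" using j id_take_nth_drop by metis
  have xL: "x \<notin> set (take i L)" "x \<notin> set (drop (Suc i) L)" 
  proof -
    have "distinct (take i L @ x # drop (Suc i) L)" using dL Ld by simp
    then show "x \<notin> set (take i L)" "x \<notin> set (drop (Suc i) L)" by auto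
  qed
  have yP: "y \<notin> set (take j P)" "y \<notin> set (drop (Suc j) P)" 
  proof -
    have "distinct (take j P @ y # drop (Suc j) P)" using dP Pd by simp
    then show "y \<notin> set (take j P)" "y \<notin> set (drop (Suc j) P)" by auto
  qed
  have xy: "x \<noteq> y" using Q dis x_def y_def by auto
  have lQ: "length Q \<ge> 2"
  proof (rule ccontr)
    assume "\<not> length Q \<ge> 2"
    moreover have "length Q \<noteq> 0" using Q(1) by simp
    ultimately have "length Q = 1" by linarith
    then obtain a where "Q = [a]" by (cases Q) auto
    then show False using xy x_def y_def by simp
  qed
  have key: "length A + length Q + length B \<le> p + 1"
    if A: "pth V E (A @ [x])" "set A \<subseteq> set L - {x}" and B: "pth V E (y # B)" "set B \<subseteq> set P - {y}"
    for A B
  proof -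
    have "set A \<inter> set Q = {}" using A(2) Q(5) x_def by blast
    moreover have "set B \<inter> set Q = {}" using B(2) Q(6) y_def by blast
    moreover have "set A \<inter> set B = {}" using A(2) B(2) dis by blast
    ultimately have "pth V E (A @ Q @ B)" using combine[OF A(1) B(1) Q(2) Q(1)] x_def y_def by blast
    then have "is_path V E (A @ Q @ B)" using is_path_pth Q(1) by auto
    then have "length (A @ Q @ B) \<le> length L" using lL longest_path_def by blast
    then show ?thesis using Lp by simp
  qed
  have A1: "pth V E (take i L @ [x])" "set (take i L) \<subseteq> set L - {x}"
  proof -
    show "pth V E (take i L @ [x])" using pth_take[OF pthL, of "Suc i"] i take_Suc_conv_app_nth by metis
    show "set (take i L) \<subseteq> set L - {x}" using xL set_take_subset set_drop_subset by fastforce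
  qed
  have A2: "pth V E (rev (drop (Suc i) L) @ [x])" "set (rev (drop (Suc i) L)) \<subseteq> set L - {x}"
  proof -
    have "drop i L = x # drop (Suc i) L" using i Cons_nth_drop_Suc by metis
    then have "rev (drop (Suc i) L) @ [x] = rev (drop i L)" by simp
    then show "pth V E (rev (drop (Suc i) L) @ [x])" using pth_rev pth_drop[OF pthL] by metis
    show "set (rev (drop (Suc i) L)) \<subseteq> set L - {x}" using xL set_take_subset set_drop_subset by fastforce
  qed
  have B1: "pth V E (y # drop (Suc j) P)" "set (drop (Suc j) P) \<subseteq> set P - {y}"
  proof -
    have "drop j P = y # drop (Suc j) P" using j Cons_nth_drop_Suc by metis
    then show "pth V E (y # drop (Suc j) P)" using pth_drop[OF pthP, of j] by simp
    show "set (drop (Suc j) P) \<subseteq> set P - {y}" using yP set_take_subset set_drop_subset by fastforce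
  qed
  have B2: "pth V E (y # rev (take j P))" "set (rev (take j P)) \<subseteq> set P - {y}"
  proof -
    have "y # rev (take j P) = rev (take (Suc j) P)" using j by (simp add: take_Suc_conv_app_nth)
    then show "pth V E (y # rev (take j P))" using pth_rev pth_take[OF pthP] by metis
    show "set (rev (take j P)) \<subseteq> set P - {y}" using yP set_take_subset set_drop_subset by fastforce
  qed
  have k1: "i + length Q + (s - j) \<le> p + 1" using key[OF A1 B1] i j Lp Ps by simp
  have k2: "i + length Q + j \<le> p + 1" using key[OF A1 B2] i j Lp Ps by simp
  have k3: "(p - i) + length Q + (s - j) \<le> p + 1" using key[OF A2 B1] i j Lp Ps by simp
  have k4: "(p - i) + length Q + j \<le> p + 1" using key[OF A2 B2] i j Lp Ps by simp
  have ar: "even p \<and> s + 2 = p \<and> i = p div 2 \<and> j = s div 2 \<and> length Q = 2"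
  proof -
    have ip: "i \<le> p" "j \<le> s" using i j Lp Ps by auto
    have d: "(s - j) + j = s" "(p - i) + i = p" using ip by auto
    have e1: "s + 2 = p" "length Q = 2" using k1 k4 lQ sp d by linarith+
    have e2: "s = 2 * j" "i = j + 1" using k1 k2 k3 k4 e1 d by linarith+
    have "p = 2 * (j + 1)" using e1 e2 by simp
    then show ?thesis using e1(2) e2 by simp
  qed
  then obtain a b where ab: "Q = [a, b]"
    by (metis One_nat_def Suc_1 length_0_conv length_Suc_conv)
  have "{x, y} \<in> E" using Q(2) ab x_def y_def by (simp add: pth_def)
  then show ?thesis using ar i j by simp
qed

lemma path_remove:
  assumes "is_path V E xs" "z \<notin> set xs"
  shows "is_path V (E - {{w, z}}) xs"
  unfolding is_path_def
proof (intro conjI allI impI)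
  show "xs \<noteq> []" "distinct xs" "set xs \<subseteq> V" using assms(1) unfolding is_path_def by auto
  fix i assume i: "Suc i < length xs"
  then have "{xs ! i, xs ! Suc i} \<in> E" using assms(1) unfolding is_path_def by blast
  moreover have "xs ! i \<in> set xs" "xs ! Suc i \<in> set xs" using i by auto
  have "{xs ! i, xs ! Suc i} \<noteq> {w, z}"
  proof
    assume eq: "{xs ! i, xs ! Suc i} = {w, z}"
    have "z \<in> {xs ! i, xs ! Suc i}" unfolding eq by simp
    then have "z = xs ! i \<or> z = xs ! Suc i" by simp
    then show False using \<open>xs ! i \<in> set xs\<close> \<open>xs ! Suc i \<in> set xs\<close> assms(2) by auto
  qed
  ultimately show "{xs ! i, xs ! Suc i} \<in> E - {{w, z}}" by blast
qed

theorem lemma2: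
  fixes V :: "'a set" and E :: "'a set set" and L P :: "'a list" and p s :: nat
  assumes "simple_graph V E"
    and "graph_connected V E"
    and "longest_path V E L" and "length L = p + 1" and "p \<ge> 2"
    and "is_path V E P" and "length P = s + 1" and "s + 2 \<ge> p"
  shows "card (set L \<inter> set P) \<ge> 1 \<or>
         (even p \<and> s + 2 = p \<and> cut_edge V E {L ! (p div 2), P ! (s div 2)})"
proof (cases "set L \<inter> set P = {}")
  case False
  then show ?thesis by (simp add: Suc_le_eq card_gt_0_iff)
next
  case dis: True
  have c: "even p \<and> s + 2 = p \<and> {L ! (p div 2), P ! (s div 2)} \<in> E"
    using core[OF assms(2,3,4,6,7,8) dis] .
  define e where "e = {L ! (p div 2), P ! (s div 2)}"
  have yP: "P ! (s div 2) \<in> set P" using assms(7) by simp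
  have yL: "P ! (s div 2) \<notin> set L" using yP dis by blast
  have xL: "L ! (p div 2) \<in> set L" using assms(4) by simp
  have xP: "L ! (p div 2) \<notin> set P" using xL dis by blast
  have pL: "is_path V E L" using assms(3) longest_path_def by blast
  have pL': "is_path V (E - {e}) L"
    using path_remove[OF pL yL] unfolding e_def .
  have pP': "is_path V (E - {e}) P"
    using path_remove[OF assms(6) xP, of "P ! (s div 2)"] unfolding e_def by (simp add: insert_commute)
  have lL': "longest_path V (E - {e}) L"
    unfolding longest_path_def
  proof (intro conjI allI impI)
    show "is_path V (E - {e}) L" by (rule pL')
    fix ys assume "is_path V (E - {e}) ys"
    then have "is_path V E ys" unfolding is_path_def by auto
    then show "length ys \<le> length L" using assms(3) longest_path_def by blast
  qed
  have "\<not> graph_connected V (E - {e})"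
  proof
    assume "graph_connected V (E - {e})"
    from core[OF this lL' assms(4) pP' assms(7,8) dis] have "e \<in> E - {e}" unfolding e_def by blast
    then show False by simp
  qed
  then have "cut_edge V E e" using c assms(2) unfolding cut_edge_def e_def by blast
  then show ?thesis using c e_def by blast
qed

end
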